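(* Let $s>0$ and let $(V_s,\oplus,\otimes)$ be the Möbius gyrovector space on the open disc $V_s=\{z\in\mathbb{C}:|z|<s\}$. Let $A,B,C,D\in V_s$ be the vertices of a gyroquadrilateral $ABCD$. Let $l$ be a gyroline passing through none of the points $A,B,C,D$, such that $l$ meets the gyroline $AB$ at $X$, the gyroline $BC$ at $Y$, the gyroline $CD$ at $Z$, and the gyroline $DA$ at $W$. Then $$\frac{(AX)_\gamma}{(BX)_\gamma}\cdot\frac{(BY)_\gamma}{(CY)_\gamma}\cdot\frac{(CZ)_\gamma}{(DZ)_\gamma}\cdot\frac{(DW)_\gamma}{(AW)_\gamma}=1.$$
   Context: Möbius addition on $V_s$ is $a\oplus b=\dfrac{a+b}{1+\bar a b/s^2}$, with $\ominus a=-a$ and $a\ominus b=a\oplus(-b)$; for $s=1$ this is the Poincaré disc model of hyperbolic geometry. For points $P,Q\in V_s$, the gyrolength (hyperbolic gyrodistance) $PQ$ is $|\ominus P\oplus Q|$. Gyrolines are the geodesics of the Poincaré disc model, i.e. the sets $\{A\oplus(\ominus A\oplus B)\otimes t: t\in\mathbb{R}\}$ for distinct $A,B$ (the gyroline $AB$); equivalently, diameters of the disc and circular arcs in the disc orthogonal to its boundary. For a gyrolength $v\in(-s,s)$, the notation $v_\gamma$ means $v_\gamma=\dfrac{v}{1-\frac{v^2}{s^2}}$; thus e.g. $(AX)_\gamma$ is this quantity for $v$ the gyrolength $AX$. *)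

theory Defs
  imports "HOL-Analysis.Analysis"
begin

definition disc :: "real \<Rightarrow> complex set" where
  "disc s = {z. cmod z < s}"

definition mobius_add :: "real \<Rightarrow> complex \<Rightarrow> complex \<Rightarrow> complex" where
  "mobius_add s a b = (a + b) / (1 + cnj a * b / (complex_of_real s)\<^sup>2)"

definition mobius_scal :: "real \<Rightarrow> real \<Rightarrow> complex \<Rightarrow> complex" where
  "mobius_scal s r a =
     (if a = 0 then 0
      else complex_of_real (s * tanh (r * artanh (cmod a / s))) * (a / complex_of_real (cmod a)))"

definition gyroline :: "real \<Rightarrow> complex \<Rightarrow> complex \<Rightarrow> complex set" where
  "gyroline s A B = {mobius_add s A (mobius_scal s t (mobius_add s (- A) B)) | t. True}"

definition gyrodist :: "real \<Rightarrow> complex \<Rightarrow> complex \<Rightarrow> real" where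
  "gyrodist s P Q = cmod (mobius_add s (- P) Q)"

definition gamma_len :: "real \<Rightarrow> real \<Rightarrow> real" where
  "gamma_len s v = v / (1 - v\<^sup>2 / s\<^sup>2)"

definition gyroquadrilateral :: "real \<Rightarrow> complex \<Rightarrow> complex \<Rightarrow> complex \<Rightarrow> complex \<Rightarrow> bool" where
  "gyroquadrilateral s A B C D \<longleftrightarrow>
     A \<in> disc s \<and> B \<in> disc s \<and> C \<in> disc s \<and> D \<in> disc s \<and>
     distinct [A, B, C, D] \<and>
     C \<notin> gyroline s A B \<and> D \<notin> gyroline s A B \<and>
     D \<notin> gyroline s A C \<and> D \<notin> gyroline s B C"

end

theory Submission
  imports Defs
begin


lemma den_nz:
  assumes "s > 0" "cmod a < s" "cmod b < s"
  shows "of_real (s^2) + cnj a * b \<noteq> 0"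
proof
  assume h: "of_real (s^2) + cnj a * b = 0"
  have "cmod (cnj a * b) = cmod a * cmod b" by (simp add: norm_mult)
  also have "\<dots> < s * s" using assms by (meson mult_strict_mono' norm_ge_zero)
  finally have "cmod (cnj a * b) < s^2" by (simp add: power2_eq_square)
  moreover have "cnj a * b = - of_real (s^2)" using h by (simp add: eq_neg_iff_add_eq_0 add.commute)
  ultimately show False using assms(1) by (simp add: norm_power) 
qed

lemma norm_id:
  fixes a b :: complex
  shows "(cmod (of_real (s^2) + cnj a * b))^2 - s^2 * (cmod (a+b))^2 = (s^2 - (cmod a)^2) * (s^2 - (cmod b)^2)"
  apply (simp only: cmod_power2)
  apply (cases a; cases b)
  apply (simp add: power2_eq_square algebra_simps)
  done




lemma den_nz':
  assumes "s > 0" "cmod a < s" "cmod b < s"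
  shows "(complex_of_real s)^2 + cnj a * b \<noteq> 0"
  using den_nz[OF assms] by simp

lemma madd_alt:
  assumes "s > 0"
  shows "mobius_add s a b = (a + b) * (complex_of_real s)^2 / ((complex_of_real s)^2 + cnj a * b)"
proof -
  have "(complex_of_real s)^2 \<noteq> 0" using assms by simp
  then show ?thesis unfolding mobius_add_def
    by (simp add: field_simps)
qed

lemma madd_eq:
  assumes "s > 0" "cmod a < s" "cmod b < s"
  shows "mobius_add s a b = c \<longleftrightarrow> c * ((complex_of_real s)^2 + cnj a * b) = (a + b) * (complex_of_real s)^2"
  using den_nz'[OF assms] by (auto simp: madd_alt[OF assms(1)] field_simps)

lemma madd_mul:
  assumes "s > 0" "cmod a < s" "cmod b < s"
  shows "mobius_add s a b * ((complex_of_real s)^2 + cnj a * b) = (a + b) * (complex_of_real s)^2"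
  using madd_eq[OF assms] by blast

lemma madd_disc:
  assumes "s > 0" "cmod a < s" "cmod b < s"
  shows "cmod (mobius_add s a b) < s"
proof -
  let ?D = "of_real (s^2) + cnj a * b"
  have D: "?D \<noteq> 0" using den_nz assms by blast
  have "(cmod a)^2 < s^2" "(cmod b)^2 < s^2" using assms by (simp_all add: power_strict_mono)
  hence p: "(s^2 - (cmod a)^2) * (s^2 - (cmod b)^2) > 0" by simp
  have "s^2 * (cmod (a+b))^2 < (cmod ?D)^2" using norm_id[of s a b] p by linarith
  hence "(s * cmod (a+b))^2 < (cmod ?D)^2" by (simp add: power_mult_distrib)
  hence "s * cmod (a+b) < cmod ?D" using power2_less_imp_less by fastforce
  hence "cmod (a+b) * s^2 < s * cmod ?D" using assms(1) by (simp add: power2_eq_square mult.commute)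
  moreover have "cmod (mobius_add s a b) = cmod (a+b) * s^2 / cmod ?D"
    using assms(1) by (simp add: madd_alt norm_mult norm_divide norm_power)
  ultimately show ?thesis using D assms(1) by (simp add: divide_less_eq power2_eq_square)
qed

lemma left_cancel:
  assumes "s > 0" "cmod a < s" "cmod b < s"
  shows "mobius_add s (-a) (mobius_add s a b) = b"
proof -
  define S where "S = (complex_of_real s)^2"
  define m where "m = mobius_add s a b"
  have D: "S + cnj a * b \<noteq> 0" using den_nz' assms unfolding S_def by blast
  have m: "m * (S + cnj a * b) = (a + b) * S" using madd_mul assms unfolding S_def m_def by blast
  have md: "cmod m < s" using madd_disc assms unfolding m_def by blast
  have S: "S \<noteq> 0" using assms unfolding S_def by simp
  have "b * (S - cnj a * m) = (m - a) * S" using D m S by algebra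
  then show ?thesis using madd_eq[of s "-a" m b] assms md unfolding S_def m_def by simp
qed




lemma tanh_artanh_real:
  fixes y :: real assumes "\<bar>y\<bar> < 1" shows "tanh (artanh y) = y"
proof -
  have q: "(1 + y) / (1 - y) > 0" using assms by auto
  have "exp (- 2 * artanh y) = 1 / ((1 + y) / (1 - y))"
    unfolding artanh_def using q by (simp add: exp_minus exp_ln)
  also have "\<dots> = (1 - y) / (1 + y)" by simp
  finally have e: "exp (- 2 * artanh y) = (1 - y) / (1 + y)" .
  have "1 + y \<noteq> 0" using assms by auto
  then show ?thesis unfolding tanh_real_altdef e by (simp add: field_simps)
qed

lemma scal_real: "\<exists>c. mobius_scal s t u = of_real c * u"
proof (cases "u = 0")
  case True then show ?thesis by (simp add: mobius_scal_def)
next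
  case False
  show ?thesis
    by (rule exI[of _ "s * tanh (t * artanh (cmod u / s)) / cmod u"])
       (use False in \<open>simp add: mobius_scal_def\<close>)
qed

lemma scal_disc:
  assumes "s > 0" shows "cmod (mobius_scal s t u) < s"
proof (cases "u = 0")
  case True then show ?thesis using assms by (simp add: mobius_scal_def)
next
  case False
  have "cmod (mobius_scal s t u) = s * \<bar>tanh (t * artanh (cmod u / s))\<bar>"
    using False assms by (simp add: mobius_scal_def norm_mult norm_divide)
  also have "\<dots> < s * 1" using tanh_real_bounds[of "t * artanh (cmod u / s)"] assms
    by (intro mult_strict_left_mono) auto
  finally show ?thesis by simp
qed

lemma scal_surj:
  assumes "s > 0" "u \<noteq> 0" "cmod u < s" "\<bar>c\<bar> * cmod u < s"
  shows "\<exists>t. mobius_scal s t u = of_real c * u"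
proof -
  have a0: "artanh (cmod u / s) \<noteq> 0"
  proof
    assume "artanh (cmod u / s) = 0"
    hence "tanh (artanh (cmod u / s)) = 0" by simp
    moreover have "tanh (artanh (cmod u / s)) = cmod u / s"
      using assms by (intro tanh_artanh_real) (simp add: divide_less_eq)
    ultimately show False using assms by simp
  qed
  let ?t = "artanh (c * cmod u / s) / artanh (cmod u / s)"
  have "tanh (?t * artanh (cmod u / s)) = c * cmod u / s"
    using a0 assms by (simp, intro tanh_artanh_real) (simp add: abs_mult divide_less_eq)
  then have "mobius_scal s ?t u = of_real (s * (c * cmod u / s)) * (u / of_real (cmod u))"
    using assms(2) unfolding mobius_scal_def by simp
  also have "\<dots> = of_real c * u" using assms by (simp add: field_simps)
  finally show ?thesis by blast
qed

lemma madd_0_right [simp]: "mobius_add s a 0 = a" by (simp add: mobius_add_def)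
lemma madd_0_left [simp]: "mobius_add s 0 b = b" by (simp add: mobius_add_def)

lemma right_inv:
  assumes "s > 0" "cmod a < s" "cmod b < s"
  shows "mobius_add s a (mobius_add s (-a) b) = b"
  using left_cancel[of s "-a" b] assms by simp

lemma madd_sym_norm:
  assumes "s > 0"
  shows "cmod (mobius_add s (-a) b) = cmod (mobius_add s (-b) a)"
proof -
  have "cmod ((complex_of_real s)^2 - cnj a * b) = cmod (cnj ((complex_of_real s)^2 - cnj b * a))"
    by (simp add: mult.commute)
  then have "cmod ((complex_of_real s)^2 - cnj a * b) = cmod ((complex_of_real s)^2 - cnj b * a)"
    by (simp only: complex_mod_cnj)
  moreover have "cmod (b - a) = cmod (a - b)" by (simp add: norm_minus_commute)
  ultimately show ?thesis using assms by (simp add: madd_alt norm_mult norm_divide)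
qed

lemma gyro_G:
  assumes "s > 0" "cmod a < s" "cmod b < s" "cmod c < s"
  shows "mobius_add s (- mobius_add s a b) (mobius_add s a c)
       = ((complex_of_real s)^2 + a * cnj b) / ((complex_of_real s)^2 + cnj a * b) * mobius_add s (-b) c"
proof -
  define S where "S = (complex_of_real s)^2"
  define m1 where "m1 = mobius_add s a b"
  define m2 where "m2 = mobius_add s a c"
  define n1 where "n1 = cnj m1"
  define r where "r = mobius_add s (-m1) m2"
  define q where "q = mobius_add s (-b) c"
  have d1: "cmod m1 < s" "cmod m2 < s" using madd_disc assms unfolding m1_def m2_def by auto
  have e1: "m1 * (S + cnj a * b) = (a + b) * S" using madd_mul assms unfolding S_def m1_def by blast
  have e2: "m2 * (S + cnj a * c) = (a + c) * S" using madd_mul assms unfolding S_def m2_def by blast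
  have e3: "n1 * (S + a * cnj b) = (cnj a + cnj b) * S"
    using arg_cong[OF e1, of cnj] unfolding n1_def S_def by (simp add: mult.commute)
  have e4: "r * (S - n1 * m2) = (m2 - m1) * S"
    using madd_mul[of s "-m1" m2] assms d1 unfolding S_def r_def n1_def by simp
  have e5: "q * (S - cnj b * c) = (c - b) * S"
    using madd_mul[of s "-b" c] assms unfolding S_def q_def by simp
  have z1: "S + cnj a * b \<noteq> 0" "S + cnj a * c \<noteq> 0" using den_nz' assms unfolding S_def by auto
  have z2: "S + a * cnj b \<noteq> 0" using den_nz'[of s "cnj a" "cnj b"] assms unfolding S_def
    by (simp add: mult.commute)
  have z3: "S - n1 * m2 \<noteq> 0" using den_nz'[of s "-m1" m2] assms d1 unfolding S_def n1_def by simp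
  have z4: "S - cnj b * c \<noteq> 0" using den_nz'[of s "-b" c] assms unfolding S_def by simp
  have z5: "S \<noteq> 0" using assms unfolding S_def by simp
  have "r * (S + cnj a * b) = (S + a * cnj b) * q"
    using e1 e2 e3 e4 e5 z1 z2 z3 z4 z5 by algebra
  then have "r = (S + a * cnj b) / (S + cnj a * b) * q" using z1 by (simp add: field_simps)
  then show ?thesis unfolding r_def m1_def m2_def q_def S_def .
qed

lemma unit_ratio:
  assumes "s > 0" "cmod a < s" "cmod b < s"
  shows "cmod (((complex_of_real s)^2 + a * cnj b) / ((complex_of_real s)^2 + cnj a * b)) = 1"
proof -
  have h: "(complex_of_real s)^2 + a * cnj b = cnj ((complex_of_real s)^2 + cnj a * b)" by simp
  have "cmod ((complex_of_real s)^2 + a * cnj b) = cmod ((complex_of_real s)^2 + cnj a * b)"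
    by (subst h, rule complex_mod_cnj)
  then show ?thesis using den_nz'[OF assms] by (simp add: norm_divide)
qed




lemma cnj_mult_self: "cnj u * u = (complex_of_real (cmod u))^2"
  by (metis complex_norm_square mult.commute of_real_power)
lemma mult_cnj_self: "u * cnj u = (complex_of_real (cmod u))^2"
  by (metis complex_norm_square of_real_power)


lemma madd_real_mult:
  assumes "s > 0"
  shows "\<exists>k. mobius_add s (-(of_real c * u)) u = of_real k * u"
proof -
  have den: "(complex_of_real s)^2 + cnj (-(of_real c * u)) * u = of_real (s^2 - c * (cmod u)^2)"
    by (simp add: cnj_mult_self mult.assoc[symmetric])
  have "mobius_add s (-(of_real c * u)) u = (u - of_real c * u) * (complex_of_real s)^2 / of_real (s^2 - c * (cmod u)^2)"
    using den by (simp add: madd_alt[OF assms])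
  also have "\<dots> = of_real ((1 - c) * s^2 / (s^2 - c * (cmod u)^2)) * u"
    by (simp add: field_simps)
  finally show ?thesis by blast
qed

lemma gyroline_disc:
  assumes "s > 0" "cmod A < s" "z \<in> gyroline s A B"
  shows "cmod z < s"
  using assms scal_disc madd_disc unfolding gyroline_def by auto

lemma gyroline_chart:
  assumes "s > 0" "cmod P < s" "cmod Q < s" "z \<in> gyroline s P Q"
  shows "\<exists>c. mobius_add s (-P) z = of_real c * mobius_add s (-P) Q"
proof -
  from assms(4) obtain t where z: "z = mobius_add s P (mobius_scal s t (mobius_add s (-P) Q))"
    unfolding gyroline_def by auto
  obtain c where c: "mobius_scal s t (mobius_add s (-P) Q) = of_real c * mobius_add s (-P) Q"
    using scal_real by blast
  have "mobius_add s (-P) z = mobius_scal s t (mobius_add s (-P) Q)"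
    unfolding z using left_cancel scal_disc assms by blast
  then show ?thesis using c by auto
qed

lemma gyroline_chart_conv:
  assumes "s > 0" "cmod P < s" "mobius_add s (-P) Q \<noteq> 0" "cmod Q < s" "cmod z < s"
    and "Im (cnj (mobius_add s (-P) Q) * mobius_add s (-P) z) = 0"
  shows "z \<in> gyroline s P Q"
proof -
  define u where "u = mobius_add s (-P) Q"
  define y where "y = mobius_add s (-P) z"
  have u0: "u \<noteq> 0" using assms unfolding u_def by simp
  have ud: "cmod u < s" "cmod y < s" using madd_disc assms unfolding u_def y_def by auto
  define R where "R = Re (cnj u * y)"
  define c where "c = R / (cmod u)^2"
  have r: "cnj u * y = of_real R" using assms(6) unfolding u_def y_def R_def
    by (simp add: complex_eq_iff)
  have "u * (cnj u * y) = of_real ((cmod u)^2) * y" by (simp only: mult.assoc[symmetric] mult_cnj_self of_real_power)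
  hence e: "of_real ((cmod u)^2) * y = of_real R * u" unfolding r by (simp add: mult.commute)
  have nz: "complex_of_real ((cmod u)^2) \<noteq> 0" using u0 by simp
  have "y = of_real ((cmod u)^2) * y / of_real ((cmod u)^2)" using nz by simp
  also have "\<dots> = of_real c * u" unfolding e c_def by simp
  finally have yc: "y = of_real c * u" .
  moreover have "\<bar>c\<bar> * cmod u < s"
  proof -
    have "cmod y = \<bar>c\<bar> * cmod u" using yc by (simp add: norm_mult)
    then show ?thesis using ud by simp
  qed
  ultimately obtain t where t: "mobius_scal s t u = y" using scal_surj assms(1) u0 ud by metis
  have "mobius_add s P y = z" unfolding y_def using right_inv assms by blast
  then show ?thesis unfolding gyroline_def u_def[symmetric] using t by auto
qed

lemma Im_par: "Im ((g * of_real r1 * u) * cnj (g * of_real r2 * u)) = 0"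
proof -
  have "(g * of_real r1 * u) * cnj (g * of_real r2 * u) = of_real (r1 * r2) * (g * cnj g) * (u * cnj u)"
    by (simp add: ac_simps)
  also have "\<dots> = of_real (r1 * r2 * (cmod g)^2 * (cmod u)^2)"
    by (simp only: mult_cnj_self of_real_mult of_real_power)
  finally have eq: "(g * of_real r1 * u) * cnj (g * of_real r2 * u) = of_real (r1 * r2 * (cmod g)^2 * (cmod u)^2)" .
  show ?thesis unfolding eq by (rule Im_complex_of_real)
qed

lemma parallel:
  assumes "s > 0" "cmod A < s" "cmod B < s" "X \<in> gyroline s A B"
  shows "Im (mobius_add s (-X) A * cnj (mobius_add s (-X) B)) = 0"
proof -
  define u where "u = mobius_add s (-A) B"
  from assms(4) obtain t where X: "X = mobius_add s A (mobius_scal s t u)"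
    unfolding gyroline_def u_def by auto
  obtain c where c: "mobius_scal s t u = of_real c * u" using scal_real by blast
  define v where "v = of_real c * u"
  have vd: "cmod v < s" using scal_disc assms c unfolding v_def by metis
  have ud: "cmod u < s" using madd_disc assms unfolding u_def by auto
  have X': "X = mobius_add s A v" using X c v_def by simp
  define g where "g = ((complex_of_real s)^2 + A * cnj v) / ((complex_of_real s)^2 + cnj A * v)"
  have "mobius_add s (-X) A = mobius_add s (- mobius_add s A v) (mobius_add s A 0)" using X' by simp
  also have "\<dots> = g * mobius_add s (-v) 0" unfolding g_def using gyro_G[of s A v 0] assms vd by simp
  also have "\<dots> = g * of_real (-c) * u" unfolding v_def by simp
  finally have 1: "mobius_add s (-X) A = g * of_real (-c) * u" .
  have B: "B = mobius_add s A u" unfolding u_def using right_inv assms by simp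
  obtain k where k: "mobius_add s (-v) u = of_real k * u" using madd_real_mult assms(1) unfolding v_def by blast
  have "mobius_add s (-X) B = mobius_add s (- mobius_add s A v) (mobius_add s A u)" using X' B by simp
  also have "\<dots> = g * mobius_add s (-v) u" unfolding g_def using gyro_G assms vd ud by simp
  finally have 2: "mobius_add s (-X) B = g * of_real k * u" using k by (simp add: mult.assoc)
  show ?thesis unfolding 1 2 by (rule Im_par)
qed




lemma Im_poly:
  fixes c s :: real and u y :: complex
  shows "Im (cnj u * ((y - of_real c * u) * (complex_of_real s)^2) * cnj ((complex_of_real s)^2 - cnj (of_real c * u) * y))
     = s^2 * (s^2 - (cmod (of_real c * u))^2) * Im (cnj u * y)"
  apply (simp only: norm_mult norm_of_real power_mult_distrib cmod_power2)
  apply (cases u; cases y)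
  apply (simp add: power2_eq_square algebra_simps)
  done

lemma K1:
  assumes "s > 0" "cmod (of_real c * u) < s" "cmod y < s"
  shows "Im (cnj u * mobius_add s (-(of_real c * u)) y) * (cmod ((complex_of_real s)^2 - cnj (of_real c * u) * y))^2
       = s^2 * (s^2 - (cmod (of_real c * u))^2) * Im (cnj u * y)"
proof -
  define x where "x = of_real c * u"
  define E where "E = (complex_of_real s)^2 - cnj x * y"
  define w where "w = mobius_add s (-x) y"
  have we: "w * E = (y - x) * (complex_of_real s)^2"
    using madd_mul[of s "-x" y] assms unfolding x_def w_def E_def by simp
  have "Im (cnj u * w) * (cmod E)^2 = Im (cnj u * w * of_real ((cmod E)^2))" by simp
  also have "\<dots> = Im (cnj u * (w * E) * cnj E)"
    by (simp only: complex_norm_square mult.assoc)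
  also have "\<dots> = Im (cnj u * ((y - x) * (complex_of_real s)^2) * cnj E)" by (simp only: we)
  also have "\<dots> = s^2 * (s^2 - (cmod x)^2) * Im (cnj u * y)"
    unfolding E_def x_def by (rule Im_poly)
  finally show ?thesis unfolding x_def E_def w_def .
qed

lemma K2:
  assumes "s > 0" "cmod x < s" "cmod y < s"
  shows "(cmod ((complex_of_real s)^2 - cnj x * y))^2 * (1 - (cmod (mobius_add s (-x) y))^2 / s^2)
       = (s^2 - (cmod x)^2) * (s^2 - (cmod y)^2)"
proof -
  define E where "E = (complex_of_real s)^2 - cnj x * y"
  have Enz: "E \<noteq> 0" using den_nz'[of s "-x" y] assms unfolding E_def by simp
  have w: "cmod (mobius_add s (-x) y) = cmod (y - x) * s^2 / cmod E"
    using assms(1) unfolding E_def by (simp add: madd_alt norm_mult norm_divide norm_power)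
  have ni: "(cmod E)^2 - s^2 * (cmod (y - x))^2 = (s^2 - (cmod x)^2) * (s^2 - (cmod y)^2)"
    using norm_id[of s "-x" y] unfolding E_def by simp
  have "(cmod E)^2 * (1 - (cmod (mobius_add s (-x) y))^2 / s^2) = (cmod E)^2 - s^2 * (cmod (y - x))^2"
    unfolding w using Enz assms(1) by (simp add: field_simps power2_eq_square)
  then show ?thesis using ni unfolding E_def by simp
qed




lemma gamma_pos:
  assumes "s > 0" "cmod w < s" "w \<noteq> 0"
  shows "gamma_len s (cmod w) > 0"
proof -
  have "(cmod w)^2 < s^2" using assms by (simp add: power_strict_mono)
  hence "(cmod w)^2 / s^2 < 1" using assms by simp
  then show ?thesis using assms unfolding gamma_len_def by simp
qed

lemma chart_core:
  assumes "s > 0" "cmod (of_real c * u) < s" "cmod y < s" "Im (cnj u * y) \<noteq> 0"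
  defines "w \<equiv> mobius_add s (-(of_real c * u)) y"
  shows "Im (cnj u * w) \<noteq> 0"
    and "gamma_len s (cmod w) * (s^2 - (cmod y)^2) / \<bar>Im (cnj u * y)\<bar> = s^2 * cmod w / \<bar>Im (cnj u * w)\<bar>"
proof -
  define x where "x = of_real c * u"
  define E2 where "E2 = (cmod ((complex_of_real s)^2 - cnj x * y))^2"
  define d where "d = s^2 - (cmod x)^2"
  define e where "e = s^2 - (cmod y)^2"
  have Enz: "(complex_of_real s)^2 - cnj x * y \<noteq> 0" using den_nz'[of s "-x" y] assms unfolding x_def by simp
  have E2p: "E2 > 0" unfolding E2_def using Enz by simp
  have dp: "d > 0" unfolding d_def using assms unfolding x_def by (simp add: power_strict_mono)
  have ep: "e > 0" unfolding e_def using assms by (simp add: power_strict_mono)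
  have k1: "Im (cnj u * w) * E2 = s^2 * d * Im (cnj u * y)"
    using K1[OF assms(1-3)] unfolding w_def E2_def d_def x_def .
  have k2: "E2 * (1 - (cmod w)^2 / s^2) = d * e"
    using K2[of s x y] assms unfolding w_def E2_def d_def e_def x_def by simp
  show nz: "Im (cnj u * w) \<noteq> 0" using k1 assms dp E2p by auto
  have g: "gamma_len s (cmod w) = cmod w * E2 / (d * e)"
  proof -
    have "1 - (cmod w)^2 / s^2 = d * e / E2" using k2 E2p by (simp add: field_simps)
    then show ?thesis unfolding gamma_len_def using E2p dp ep by simp
  qed
  have ab: "\<bar>Im (cnj u * w)\<bar> * E2 = s^2 * d * \<bar>Im (cnj u * y)\<bar>"
    using arg_cong[OF k1, of abs] E2p dp by (simp add: abs_mult)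
  show "gamma_len s (cmod w) * (s^2 - (cmod y)^2) / \<bar>Im (cnj u * y)\<bar> = s^2 * cmod w / \<bar>Im (cnj u * w)\<bar>"
    unfolding g e_def[symmetric] using ab nz assms(4) E2p dp ep assms(1)
    by (simp add: field_simps)
qed

lemma ratio_par:
  assumes "Im (wa * cnj wb) = 0" "Im (cnj u * wa) \<noteq> 0" "Im (cnj u * wb) \<noteq> 0"
  shows "cmod wa / \<bar>Im (cnj u * wa)\<bar> = cmod wb / \<bar>Im (cnj u * wb)\<bar>"
proof -
  have wb0: "wb \<noteq> 0" using assms(3) by auto
  define R where "R = Re (wa * cnj wb)"
  have r: "wa * cnj wb = of_real R" using assms(1) unfolding R_def by (simp add: complex_eq_iff)
  have "wa * (wb * cnj wb) = of_real R * wb" using r by (metis mult.assoc mult.commute)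
  hence e: "wa * of_real ((cmod wb)^2) = of_real R * wb" by (simp only: mult_cnj_self of_real_power)
  define k where "k = R / (cmod wb)^2"
  have nz: "complex_of_real ((cmod wb)^2) \<noteq> 0" using wb0 by simp
  have "wa = wa * of_real ((cmod wb)^2) / of_real ((cmod wb)^2)" using nz by simp
  also have "\<dots> = of_real k * wb" unfolding e k_def by simp
  finally have wa: "wa = of_real k * wb" .
  have k0: "k \<noteq> 0" using assms(2) wa by auto
  have "Im (cnj u * wa) = k * Im (cnj u * wb)" unfolding wa by (simp add: algebra_simps)
  moreover have "cmod wa = \<bar>k\<bar> * cmod wb" unfolding wa by (simp add: norm_mult)
  ultimately show ?thesis using k0 by (simp add: abs_mult)
qed




definition hh :: "real \<Rightarrow> complex \<Rightarrow> complex \<Rightarrow> complex \<Rightarrow> real" where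
  "hh s P Q a = \<bar>Im (cnj (mobius_add s (-P) Q) * mobius_add s (-P) a)\<bar> / (s^2 - (cmod (mobius_add s (-P) a))^2)"

lemma off_line_Im:
  assumes "s > 0" "cmod P < s" "cmod Q < s" "mobius_add s (-P) Q \<noteq> 0" "cmod a < s"
    "a \<notin> gyroline s P Q"
  shows "Im (cnj (mobius_add s (-P) Q) * mobius_add s (-P) a) \<noteq> 0"
  using gyroline_chart_conv assms by blast

lemma hh_pos:
  assumes "s > 0" "cmod P < s" "cmod Q < s" "mobius_add s (-P) Q \<noteq> 0" "cmod a < s"
    "a \<notin> gyroline s P Q"
  shows "hh s P Q a > 0"
proof -
  have "cmod (mobius_add s (-P) a) < s" using madd_disc assms by simp
  hence "(cmod (mobius_add s (-P) a))^2 < s^2" by (simp add: power_strict_mono)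
  then show ?thesis unfolding hh_def using off_line_Im[OF assms] by simp
qed

lemma point_part:
  assumes "s > 0" "cmod P < s" "cmod Q < s" "mobius_add s (-P) Q \<noteq> 0" "cmod a < s"
    "a \<notin> gyroline s P Q" "X \<in> gyroline s P Q"
    "mobius_add s (-P) X = of_real c * mobius_add s (-P) Q"
  defines "w \<equiv> mobius_add s (-(mobius_add s (-P) X)) (mobius_add s (-P) a)"
  defines "g \<equiv> ((complex_of_real s)^2 + P * cnj (mobius_add s (-P) X)) / ((complex_of_real s)^2 + cnj P * mobius_add s (-P) X)"
  shows "mobius_add s (-X) a = g * w"
    and "gyrodist s a X = cmod w"
    and "Im (cnj (mobius_add s (-P) Q) * w) \<noteq> 0"
    and "gamma_len s (gyrodist s a X) / hh s P Q a = s^2 * cmod w / \<bar>Im (cnj (mobius_add s (-P) Q) * w)\<bar>"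
    and "cmod w < s" "w \<noteq> 0" "cmod g = 1"
proof -
  define u where "u = mobius_add s (-P) Q"
  define x where "x = mobius_add s (-P) X"
  define y where "y = mobius_add s (-P) a"
  have Xd: "cmod X < s" using gyroline_disc assms by blast
  have xd: "cmod x < s" "cmod y < s" unfolding x_def y_def
    by (rule madd_disc; use assms Xd in simp)+
  have X: "mobius_add s P x = X" unfolding x_def using right_inv assms Xd by blast
  have a: "mobius_add s P y = a" unfolding y_def using right_inv assms by blast
  have G: "mobius_add s (- mobius_add s P x) (mobius_add s P y) = ((complex_of_real s)^2 + P * cnj x) / ((complex_of_real s)^2 + cnj P * x) * mobius_add s (-x) y"
    by (rule gyro_G) (use assms(1,2) xd in auto)
  show 1: "mobius_add s (-X) a = g * w"
    unfolding g_def w_def x_def[symmetric] y_def[symmetric] using G unfolding X a .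
  have gu: "cmod g = 1" unfolding g_def using unit_ratio assms xd unfolding x_def by blast
  show 2: "gyrodist s a X = cmod w"
  proof -
    have "gyrodist s a X = cmod (mobius_add s (-X) a)" unfolding gyrodist_def using madd_sym_norm[of s a X] assms(1) .
    also have "\<dots> = cmod g * cmod w" unfolding 1 by (rule norm_mult)
    finally show ?thesis using gu by simp
  qed
  have Iy: "Im (cnj u * y) \<noteq> 0" unfolding u_def y_def using off_line_Im assms by blast
  have xc: "x = of_real c * u" unfolding x_def u_def using assms(8) .
  have cc: "cmod (of_real c * u) < s" using xd xc by simp
  note core = chart_core[OF assms(1) cc xd(2) Iy]
  show 3: "Im (cnj u * w) \<noteq> 0" using core(1) unfolding w_def xc[unfolded x_def] y_def[symmetric] x_def[symmetric] .
  have "gamma_len s (cmod w) * (s^2 - (cmod y)^2) / \<bar>Im (cnj u * y)\<bar> = s^2 * cmod w / \<bar>Im (cnj u * w)\<bar>"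
    using core(2) unfolding w_def xc[unfolded x_def] y_def[symmetric] x_def[symmetric] .
  moreover have "hh s P Q a = \<bar>Im (cnj u * y)\<bar> / (s^2 - (cmod y)^2)" unfolding hh_def u_def y_def ..
  ultimately show "gamma_len s (gyrodist s a X) / hh s P Q a = s^2 * cmod w / \<bar>Im (cnj (mobius_add s (-P) Q) * w)\<bar>"
    unfolding 2 u_def[symmetric] by (simp only: divide_divide_eq_right)
  show "cmod w < s" unfolding w_def x_def[symmetric] y_def[symmetric] by (rule madd_disc) (use assms(1) xd in auto)
  show "w \<noteq> 0" using 3 u_def by auto
  show "cmod g = 1" by (rule gu)
qed

lemma side:
  assumes "s > 0" "cmod P < s" "cmod Q < s" "mobius_add s (-P) Q \<noteq> 0" "cmod A < s" "cmod B < s"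
    "A \<notin> gyroline s P Q" "B \<notin> gyroline s P Q" "X \<in> gyroline s P Q" "X \<in> gyroline s A B"
  shows "gamma_len s (gyrodist s A X) / gamma_len s (gyrodist s B X) = hh s P Q A / hh s P Q B"
    and "gamma_len s (gyrodist s B X) > 0"
proof -
  define u where "u = mobius_add s (-P) Q"
  obtain c where xc: "mobius_add s (-P) X = of_real c * mobius_add s (-P) Q"
    using gyroline_chart assms by blast
  define g where "g \<equiv> ((complex_of_real s)^2 + P * cnj (mobius_add s (-P) X)) / ((complex_of_real s)^2 + cnj P * mobius_add s (-P) X)"
  define wa where "wa \<equiv> mobius_add s (-(mobius_add s (-P) X)) (mobius_add s (-P) A)"
  define wb where "wb \<equiv> mobius_add s (-(mobius_add s (-P) X)) (mobius_add s (-P) B)"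
  note pa = point_part[OF assms(1-5,7,9) xc, folded g_def wa_def u_def]
  note pb = point_part[OF assms(1-4,6,8,9) xc, folded g_def wb_def u_def]
  have par: "Im (mobius_add s (-X) A * cnj (mobius_add s (-X) B)) = 0"
    using parallel assms by blast
  have "mobius_add s (-X) A * cnj (mobius_add s (-X) B) = (g * cnj g) * (wa * cnj wb)"
    unfolding pa(1) pb(1) by (simp add: ac_simps)
  also have "\<dots> = wa * cnj wb" unfolding mult_cnj_self pa(7) by simp
  finally have "Im (wa * cnj wb) = 0" using par by simp
  then have r: "cmod wa / \<bar>Im (cnj u * wa)\<bar> = cmod wb / \<bar>Im (cnj u * wb)\<bar>"
    using ratio_par pa(3) pb(3) by blast
  have e: "gamma_len s (gyrodist s A X) / hh s P Q A = gamma_len s (gyrodist s B X) / hh s P Q B"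
  proof -
    have "gamma_len s (gyrodist s A X) / hh s P Q A = s^2 * (cmod wa / \<bar>Im (cnj u * wa)\<bar>)"
      using pa(4) by (simp only: times_divide_eq_right)
    also have "\<dots> = s^2 * (cmod wb / \<bar>Im (cnj u * wb)\<bar>)" by (simp only: r)
    also have "\<dots> = gamma_len s (gyrodist s B X) / hh s P Q B"
      using pb(4) by (simp only: times_divide_eq_right)
    finally show ?thesis .
  qed
  have ha: "hh s P Q A > 0" using hh_pos assms by blast
  have hb: "hh s P Q B > 0" using hh_pos assms by blast
  show gb: "gamma_len s (gyrodist s B X) > 0" unfolding pb(2) using gamma_pos assms(1) pb(5,6) by blast
  show "gamma_len s (gyrodist s A X) / gamma_len s (gyrodist s B X) = hh s P Q A / hh s P Q B"
  proof -
    have "gamma_len s (gyrodist s A X) * hh s P Q B = gamma_len s (gyrodist s B X) * hh s P Q A"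
      using e ha hb by (simp add: frac_eq_eq)
    then show ?thesis using hb gb by (simp add: frac_eq_eq mult.commute)
  qed
qed



theorem theorem3:
  fixes s :: real and A B C D P Q X Y Z W :: complex
  assumes "s > 0"
    and "gyroquadrilateral s A B C D"
    and "P \<in> disc s" "Q \<in> disc s" "P \<noteq> Q"
    and "A \<notin> gyroline s P Q" "B \<notin> gyroline s P Q"
    and "C \<notin> gyroline s P Q" "D \<notin> gyroline s P Q"
    and "X \<in> gyroline s P Q" "X \<in> gyroline s A B"
    and "Y \<in> gyroline s P Q" "Y \<in> gyroline s B C"
    and "Z \<in> gyroline s P Q" "Z \<in> gyroline s C D"
    and "W \<in> gyroline s P Q" "W \<in> gyroline s D A"
  shows "gamma_len s (gyrodist s A X) / gamma_len s (gyrodist s B X) *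
         (gamma_len s (gyrodist s B Y) / gamma_len s (gyrodist s C Y)) *
         (gamma_len s (gyrodist s C Z) / gamma_len s (gyrodist s D Z)) *
         (gamma_len s (gyrodist s D W) / gamma_len s (gyrodist s A W)) = 1"
proof -
  have d: "cmod A < s" "cmod B < s" "cmod C < s" "cmod D < s" "cmod P < s" "cmod Q < s"
    using assms(2-4) unfolding gyroquadrilateral_def disc_def by auto
  have u: "mobius_add s (-P) Q \<noteq> 0"
  proof
    assume "mobius_add s (-P) Q = 0"
    then have "mobius_add s P (mobius_add s (-P) Q) = P" by simp
    then show False using right_inv[of s P Q] assms(1,5) d by simp
  qed
  have hA: "hh s P Q A > 0" using hh_pos assms d u by blast
  have hB: "hh s P Q B > 0" using hh_pos assms d u by blast
  have hC: "hh s P Q C > 0" using hh_pos assms d u by blast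
  have hD: "hh s P Q D > 0" using hh_pos assms d u by blast
  have 1: "gamma_len s (gyrodist s A X) / gamma_len s (gyrodist s B X) = hh s P Q A / hh s P Q B"
    by (rule side(1)) (use assms d u in auto)
  have 2: "gamma_len s (gyrodist s B Y) / gamma_len s (gyrodist s C Y) = hh s P Q B / hh s P Q C"
    by (rule side(1)) (use assms d u in auto)
  have 3: "gamma_len s (gyrodist s C Z) / gamma_len s (gyrodist s D Z) = hh s P Q C / hh s P Q D"
    by (rule side(1)) (use assms d u in auto)
  have 4: "gamma_len s (gyrodist s D W) / gamma_len s (gyrodist s A W) = hh s P Q D / hh s P Q A"
    by (rule side(1)) (use assms d u in auto)
  show ?thesis unfolding 1 2 3 4 using hA hB hC hD by (simp add: field_simps)
qed

end
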